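(* Let $d\ge0$ and consider the Gaussian broadcast model on $P=\mathbb{Z}_{\ge0}^{d+1}$ in the critical case $\alpha_i=1/i$ for all $i\in\{1,\dots,d+1\}$. There is a constant $K_d>0$ depending only on $d$ such that for every integer $t\ge1$ and every choice of reals $c_u\ge0$ ($u\in L_t$) with $\sum_{u\in L_t}c_u>0$, the random variable $\zeta=\sum_{u\in L_t}c_uX_u$ satisfies $$\frac{\operatorname{Cov}(\zeta,X_0)}{\sqrt{\operatorname{Var}(\zeta)}}\le \frac{K_d}{t^{1/4}}.$$
   Context: Gaussian broadcast model: Let $d\ge 0$ and let $P$ be an infinite graded poset with layers $L_0,L_1,\dots$ ($L_t$ = elements of rank $t$, $L_0$ = minimal elements), in which every element covers at most $d+1$ elements. For $v\in P$ let $\mathfrak p(v)$ be the set of elements covered by $v$. Given $\alpha_1,\dots,\alpha_{d+1}>0$, let $X_0\sim\mathcal N(0,1)$ and, independently, let $W_{u\to v}$ be i.i.d. $\mathcal N(0,1)$ indexed by covering pairs $u\lessdot v$. Set $X_v=X_0$ for $v\in L_0$, and for $v$ of rank $\ge1$ set $X_v=\alpha_{|\mathfrak p(v)|}\sum_{u\in\mathfrak p(v)}(X_u+W_{u\to v})$. Finite model: $P=\mathbb{Z}_{\ge0}^{d+1}$ with $u\le v$ iff $v-u\in\mathbb{Z}_{\ge0}^{d+1}$; $L_t$ is the set of tuples with coordinate sum $t$; $|\mathfrak p(v)|$ equals the number of positive coordinates of $v$. *)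

theory Defs
  imports "HOL-Probability.Probability"
begin

text \<open>Vertices of P = Z_{>=0}^{d+1} are lists of naturals of length d+1.
  A covering pair u < v is encoded as (v, i) with i < length v and v!i > 0;
  then u = v[i := v!i - 1].\<close>

definition layer :: "nat \<Rightarrow> nat \<Rightarrow> nat list set" where
  "layer d t = {v. length v = Suc d \<and> sum_list v = t}"

definition cover_edges :: "nat \<Rightarrow> (nat list \<times> nat) set" where
  "cover_edges d = {(v, i). length v = Suc d \<and> i < length v \<and> 0 < v ! i}"

definition parent_idx :: "nat list \<Rightarrow> nat set" where
  "parent_idx v = {i. i < length v \<and> 0 < v ! i}"

text \<open>Gaussian broadcast in the critical case alpha_k = 1/k.
  G None is X_0, G (Some (v,i)) is the noise W on the edge into v along coordinate i.
  bX G t v is the value X_v for v of rank t.\<close>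

fun bX :: "((nat list \<times> nat) option \<Rightarrow> 'a \<Rightarrow> real) \<Rightarrow> nat \<Rightarrow> nat list \<Rightarrow> 'a \<Rightarrow> real" where
  "bX G 0 v \<omega> = G None \<omega>"
| "bX G (Suc t) v \<omega> =
     (1 / real (card (parent_idx v))) *
     (\<Sum>i\<in>parent_idx v. bX G t (v[i := v ! i - 1]) \<omega> + G (Some (v, i)) \<omega>)"

definition broadcastX :: "((nat list \<times> nat) option \<Rightarrow> 'a \<Rightarrow> real) \<Rightarrow> nat list \<Rightarrow> 'a \<Rightarrow> real" where
  "broadcastX G v = bX G (sum_list v) v"

definition covariance :: "'a measure \<Rightarrow> ('a \<Rightarrow> real) \<Rightarrow> ('a \<Rightarrow> real) \<Rightarrow> real" where
  "covariance M X Y =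
     (\<integral>\<omega>. (X \<omega> - (\<integral>x. X x \<partial>M)) * (Y \<omega> - (\<integral>x. Y x \<partial>M)) \<partial>M)"

definition var :: "'a measure \<Rightarrow> ('a \<Rightarrow> real) \<Rightarrow> real" where
  "var M X = covariance M X X"

end

theory Submission
  imports Defs
begin


definition pp :: "nat \<Rightarrow> real \<Rightarrow> real" where
  "pp m x = exp (- x) * x ^ m / fact m"

definition PS :: "nat \<Rightarrow> real \<Rightarrow> real" where
  "PS n x = (\<Sum>m<n. pp m x)"

lemma pp_nonneg: "0 \<le> x \<Longrightarrow> 0 \<le> pp m x"
  by (simp add: pp_def)

lemma PS_nonneg: "0 \<le> x \<Longrightarrow> 0 \<le> PS n x"
  by (simp add: PS_def pp_nonneg sum_nonneg)

lemma PS_le1: assumes "0 \<le> x" shows "PS n x \<le> 1"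
proof -
  have "(\<Sum>m<n. inverse (fact m) * x ^ m) \<le> (\<Sum>m. inverse (fact m) * x ^ m)"
    using assms by (intro sum_le_suminf[OF summable_exp]) auto
  also have "\<dots> = exp x" by (simp add: exp_def scaleR_conv_of_real field_simps)
  finally have h: "(\<Sum>m<n. inverse (fact m) * x ^ m) \<le> exp x" .
  have "PS n x = exp (-x) * (\<Sum>m<n. inverse (fact m) * x ^ m)"
    by (simp add: PS_def pp_def sum_distrib_left field_simps)
  also have "\<dots> \<le> exp (-x) * exp x"
    using h by (intro mult_left_mono) auto
  also have "\<dots> = 1" by (simp add: exp_minus field_simps)
  finally show ?thesis .
qed

lemma PS_mono: "0 \<le> x \<Longrightarrow> m \<le> n \<Longrightarrow> PS m x \<le> PS n x"
  unfolding PS_def by (rule sum_mono2) (auto simp: pp_nonneg)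

lemma pp_at0: "pp m 0 = (if m = 0 then 1 else 0)"
  by (simp add: pp_def)

lemma PS_at0: "PS n 0 = (if n = 0 then 0 else 1)"
proof (cases n)
  case (Suc k)
  have "PS n 0 = (\<Sum>m<Suc k. if m = 0 then 1 else 0)"
    by (simp add: PS_def pp_at0 Suc)
  also have "\<dots> = 1" by (subst sum.If_cases) auto
  finally show ?thesis using Suc by simp
qed (simp add: PS_def)

lemma pp_deriv:
  "(pp m has_real_derivative (if m = 0 then - pp 0 x else pp (m - 1) x - pp m x)) (at x)"
proof (cases m)
  case 0
  show ?thesis unfolding 0 pp_def
    by (auto intro!: derivative_eq_intros)
next
  case (Suc k)
  have "((\<lambda>x. exp (- x) * x ^ Suc k / fact (Suc k)) has_real_derivative
     ((- exp (- x)) * x ^ Suc k + exp (-x) * (of_nat (Suc k) * x ^ k)) / fact (Suc k)) (at x)"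
    apply (auto intro!: derivative_eq_intros)
    apply (cases k)
     apply (auto simp: algebra_simps)
    done
  moreover have "((- exp (- x)) * x ^ Suc k + exp (-x) * (of_nat (Suc k) * x ^ k)) / fact (Suc k)
      = pp k x - pp (Suc k) x"
    by (simp add: pp_def field_simps del: of_nat_Suc)
  ultimately show ?thesis unfolding Suc pp_def by simp
qed

lemma PS_Suc_deriv: "(PS (Suc n) has_real_derivative - pp n x) (at x)"
proof (induction n)
  case 0
  show ?case using pp_deriv[of 0 x] by (simp add: PS_def)
next
  case (Suc n)
  have e: "PS (Suc (Suc n)) = (\<lambda>x. PS (Suc n) x + pp (Suc n) x)"
    by (simp add: PS_def fun_eq_iff)
  have "((\<lambda>x. PS (Suc n) x + pp (Suc n) x) has_real_derivative
      (- pp n x + (pp n x - pp (Suc n) x))) (at x)"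
    using Suc pp_deriv[of "Suc n" x] by (auto intro!: derivative_eq_intros)
  then show ?case unfolding e by simp
qed

lemma PS_deriv: "(PS n has_real_derivative (if n = 0 then 0 else - pp (n - 1) x)) (at x)"
proof (cases n)
  case 0
  have "PS 0 = (\<lambda>x. 0)" by (simp add: PS_def fun_eq_iff)
  then show ?thesis using 0 by simp
next
  case (Suc k) then show ?thesis using PS_Suc_deriv[of k x] by simp
qed

lemma PS_cont: "isCont (PS n) x"
  using PS_deriv DERIV_isCont by blast

lemma pp_tendsto0: "(pp m \<longlongrightarrow> 0) at_top"
proof -
  have "((\<lambda>x::real. (x ^ m / exp x) * inverse (fact m)) \<longlongrightarrow> 0) at_top"
    by (rule tendsto_mult_left_zero[OF tendsto_power_div_exp_0])
  moreover have "(\<lambda>x. (x ^ m / exp x) * inverse (fact m)) = pp m"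
    by (simp add: fun_eq_iff pp_def exp_minus field_simps)
  ultimately show ?thesis by simp
qed

lemma PS_tendsto0: "(PS n \<longlongrightarrow> 0) at_top"
proof -
  have "((\<lambda>x. \<Sum>m<n. pp m x) \<longlongrightarrow> (\<Sum>m<n. 0)) at_top"
    by (intro tendsto_sum pp_tendsto0)
  then show ?thesis by (simp add: PS_def[abs_def])
qed

lemma pp_le_self:
  assumes "0 \<le> x" "1 \<le> j" shows "pp j x \<le> pp j (real j)"
proof (cases "x = 0")
  case True then show ?thesis using assms by (simp add: pp_def power_0_left)
next
  case False
  then have xp: "0 < x" using assms by simp
  have jp: "0 < real j" using assms by simp
  have "ln (x / j) \<le> x / j - 1" using xp jp by (intro ln_le_minus_one) auto
  then have "j * ln (x / j) \<le> j * (x / j - 1)" using jp by (intro mult_left_mono) auto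
  moreover have "ln (x / j) = ln x - ln j" using xp jp by (simp add: ln_div)
  moreover have "j * (x / j - 1) = x - j" using jp by (simp add: field_simps)
  ultimately have "j * (ln x - ln j) \<le> x - j" by simp
  then have "- x + j * ln x \<le> - real j + j * ln j" by (simp add: algebra_simps)
  then have e: "exp (- x + j * ln x) \<le> exp (- real j + j * ln j)" by simp
  have eq1: "exp (- x + j * ln x) = exp (-x) * x ^ j"
  proof -
    have "exp (real j * ln x) = x ^ j" using xp by (subst exp_of_nat_mult) simp
    moreover have "exp (- x + j * ln x) = exp (-x) * exp (real j * ln x)" by (rule exp_add)
    ultimately show ?thesis by simp
  qed
  have eq2: "exp (- real j + j * ln j) = exp (- real j) * real j ^ j"
  proof -
    have "exp (real j * ln j) = real j ^ j" using jp by (subst exp_of_nat_mult) simp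
    moreover have "exp (- real j + j * ln j) = exp (- real j) * exp (real j * ln j)" by (rule exp_add)
    ultimately show ?thesis by simp
  qed
  have "exp (-x) * x ^ j \<le> exp (- real j) * real j ^ j" using e unfolding eq1 eq2 .
  then show ?thesis unfolding pp_def by (simp add: divide_right_mono)
qed

lemma fact_add_le: "fact (j + l) \<le> (fact j :: real) * real (j + l) ^ l"
proof (induction l)
  case (Suc l)
  have "fact (j + Suc l) = real (j + Suc l) * (fact (j + l) :: real)"
    by (simp add: algebra_simps)
  also have "\<dots> \<le> real (j + Suc l) * (fact j * real (j + l) ^ l)"
    using Suc by (intro mult_left_mono) auto
  also have "\<dots> \<le> real (j + Suc l) * (fact j * real (j + Suc l) ^ l)"
    by (intro mult_left_mono power_mono) auto
  also have "\<dots> = fact j * real (j + Suc l) ^ Suc l" by simp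
  finally show ?case .
qed simp

lemma pp_shift_ge:
  assumes "1 \<le> j" "l * l \<le> j"
  shows "pp j (real j) / exp 1 \<le> pp (j + l) (real j)"
proof -
  have jp: "0 < real j" using assms by simp
  have "(1 + real l / j) ^ l \<le> exp (real l / j) ^ l"
    by (intro power_mono) (auto simp: exp_ge_add_one_self_aux)
  also have "\<dots> = exp (real l * (real l / j))" by (subst exp_of_nat_mult) simp
  also have "\<dots> \<le> exp 1"
    using assms jp by (simp add: field_simps) (metis of_nat_le_iff of_nat_mult)
  finally have h1: "(1 + real l / j) ^ l \<le> exp 1" .
  have h2: "real (j + l) ^ l = real j ^ l * (1 + real l / j) ^ l"
    using jp by (simp add: power_mult_distrib[symmetric] field_simps)
  have "fact (j + l) \<le> (fact j :: real) * (real j ^ l * exp 1)"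
    using fact_add_le[of j l] h2 h1
    by (metis (no_types, opaque_lifting) fact_ge_zero mult_left_mono order_trans zero_le_power of_nat_0_le_iff)
  then have "exp (- real j) * real j ^ j * real j ^ l / (fact j * (real j ^ l * exp 1))
      \<le> exp (- real j) * real j ^ j * real j ^ l / fact (j + l)"
    using jp by (intro divide_left_mono mult_pos_pos) auto
  moreover have "exp (- real j) * real j ^ j * real j ^ l / (fact j * (real j ^ l * exp 1))
      = pp j (real j) / exp 1"
    using jp by (simp add: pp_def field_simps)
  moreover have "exp (- real j) * real j ^ j * real j ^ l / fact (j + l) = pp (j + l) (real j)"
    by (simp add: pp_def power_add)
  ultimately show ?thesis by simp
qed

lemma pp_self_le:
  assumes "1 \<le> j" shows "pp j (real j) \<le> exp 1 / sqrt j"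
proof -
  define r where "r = nat \<lfloor>sqrt (real j)\<rfloor>"
  have r1: "real r \<le> sqrt j" unfolding r_def by simp
  have r2: "sqrt j < real r + 1" unfolding r_def by linarith
  have rr: "r * r \<le> j"
  proof -
    have "real r * real r \<le> sqrt j * sqrt j" using r1 by (intro mult_mono) auto
    then have "real (r * r) \<le> real j" by simp
    then show ?thesis by linarith
  qed
  have "(\<Sum>l\<le>r. pp j (real j) / exp 1) \<le> (\<Sum>l\<le>r. pp (j + l) (real j))"
  proof (intro sum_mono pp_shift_ge[OF assms])
    fix l assume "l \<in> {..r}"
    then have "l * l \<le> r * r" by (intro mult_mono) auto
    then show "l * l \<le> j" using rr by simp
  qed
  also have "\<dots> = (\<Sum>m\<in>(\<lambda>l. j + l) ` {..r}. pp m (real j))"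
    by (subst sum.reindex) (auto simp: inj_on_def)
  also have "\<dots> \<le> PS (j + r + 1) (real j)"
    unfolding PS_def by (rule sum_mono2) (auto simp: pp_nonneg)
  also have "\<dots> \<le> 1" by (rule PS_le1) simp
  finally have "(1 + real r) * (pp j (real j) / exp 1) \<le> 1" by simp
  then have "pp j (real j) \<le> exp 1 / (real r + 1)"
    by (simp add: field_simps)
  also have "\<dots> \<le> exp 1 / sqrt j"
    using r2 assms by (intro divide_left_mono) auto
  finally show ?thesis .
qed

lemma pp_le:
  assumes "0 \<le> x" "1 \<le> j" shows "pp j x \<le> exp 1 / sqrt j"
  using pp_le_self[OF assms] pp_self_le[OF assms(2)] by simp

lemma mid_le:
  assumes "0 \<le> x" "1 \<le> L"
  shows "PS (n + L) x - PS (Suc n) x \<le> (real L - 1) * (exp 1 / sqrt (real (Suc n)))"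
proof -
  have "PS (n + L) x - PS (Suc n) x = (\<Sum>m\<in>{Suc n..<n + L}. pp m x)"
  proof -
    have "{..<n + L} = {..<Suc n} \<union> {Suc n..<n+L}" using assms by auto
    moreover have "(\<Sum>m\<in>{..<Suc n} \<union> {Suc n..<n + L}. pp m x) = (\<Sum>m<Suc n. pp m x) + (\<Sum>m\<in>{Suc n..<n + L}. pp m x)"
      by (rule sum.union_disjoint) auto
    ultimately have "(\<Sum>m<n + L. pp m x) = (\<Sum>m<Suc n. pp m x) + (\<Sum>m\<in>{Suc n..<n + L}. pp m x)"
      by simp
    then show ?thesis unfolding PS_def by simp
  qed
  also have "\<dots> \<le> (\<Sum>m\<in>{Suc n..<n + L}. exp 1 / sqrt (real (Suc n)))"
  proof (intro sum_mono)
    fix m assume m: "m \<in> {Suc n..<n + L}"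
    have "pp m x \<le> exp 1 / sqrt m" using m assms by (intro pp_le) auto
    also have "\<dots> \<le> exp 1 / sqrt (real (Suc n))" using m by (intro divide_left_mono) auto
    finally show "pp m x \<le> exp 1 / sqrt (real (Suc n))" .
  qed
  also have "\<dots> = (real L - 1) * (exp 1 / sqrt (real (Suc n)))"
    using assms by (simp add: of_nat_diff)
  finally show ?thesis .
qed

lemma theta_exists:
  assumes "1 \<le> L" and mid: "\<And>x. 0 \<le> x \<Longrightarrow> PS (n + L) x - PS (Suc n) x \<le> 1/2"
  shows "\<exists>x\<ge>0. 1/4 \<le> PS (Suc n) x \<and> 1/4 \<le> 1 - PS (n + L) x"
proof -
  have "eventually (\<lambda>x. PS (Suc n) x < 1/4) at_top"
    using PS_tendsto0[of "Suc n"] by (rule order_tendstoD) simp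
  then obtain x0 where x0: "\<And>x. x \<ge> x0 \<Longrightarrow> PS (Suc n) x < 1/4"
    by (auto simp: eventually_at_top_linorder)
  define x1 where "x1 = max x0 0"
  have x1: "0 \<le> x1" "PS (Suc n) x1 < 1/4" using x0 by (auto simp: x1_def)
  define f where "f = (\<lambda>x. PS (Suc n) x - (1 - PS (n + L) x))"
  have "f x1 \<le> 0" using x1 mid[OF x1(1)] by (simp add: f_def)
  moreover have "0 \<le> f 0" using assms by (simp add: f_def PS_at0)
  moreover have "\<forall>x. 0 \<le> x \<and> x \<le> x1 \<longrightarrow> isCont f x"
    unfolding f_def by (auto intro!: continuous_intros PS_cont)
  ultimately obtain x where x: "0 \<le> x" "x \<le> x1" "f x = 0"
    using IVT2[of f x1 0 0] x1 by auto
  have "PS (n + L) x - PS (Suc n) x \<le> 1/2" using mid x by simp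
  then show ?thesis using x by (intro exI[of _ x]) (auto simp: f_def)
qed



fun W :: "nat \<Rightarrow> nat list \<Rightarrow> (nat list \<times> nat) \<Rightarrow> real" where
  "W 0 v e = 0"
| "W (Suc t) v e = (1 / real (card (parent_idx v))) *
     (\<Sum>i\<in>parent_idx v. W t (v[i := v ! i - 1]) e + (if e = (v, i) then 1 else 0))"

lemma finite_parent_idx[simp]: "finite (parent_idx v)"
  unfolding parent_idx_def by auto

lemma parent_idx_sub: "parent_idx v \<subseteq> {..<length v}"
  unfolding parent_idx_def by auto

lemma sum_list_upd:
  assumes "i \<in> parent_idx v"
  shows "sum_list (v[i := v ! i - 1]) = sum_list v - 1"
proof -
  have i: "i < length v" "0 < v ! i" using assms by (auto simp: parent_idx_def)
  have "v ! i \<le> sum_list v" using i(1) by (simp add: elem_le_sum_list)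
  then show ?thesis using i sum_list_update[OF i(1), of "v ! i - 1"] by simp
qed

lemma sum_list_zero_nat: "(\<forall>x\<in>set v. x = 0) \<Longrightarrow> sum_list v = (0::nat)"
  by (induct v) auto

lemma parent_idx_nonempty:
  assumes "0 < sum_list v" shows "parent_idx v \<noteq> {}"
proof
  assume "parent_idx v = {}"
  then have "\<forall>i<length v. v ! i = 0" by (auto simp: parent_idx_def)
  then have "\<forall>x\<in>set v. x = 0" by (auto simp: in_set_conv_nth)
  then have "sum_list v = 0" by (rule sum_list_zero_nat)
  then show False using assms by linarith
qed

lemma card_parent_pos: "0 < sum_list v \<Longrightarrow> 0 < card (parent_idx v)"
  using parent_idx_nonempty by (simp add: card_gt_0_iff)

lemma W_nonneg: "0 \<le> W t v e"
  by (induction t arbitrary: v) (auto intro!: sum_nonneg mult_nonneg_nonneg divide_nonneg_nonneg)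

lemma W_zero: "sum_list v < sum_list (fst e) \<Longrightarrow> W t v e = 0"
proof (induction t arbitrary: v)
  case (Suc t)
  have "\<forall>i\<in>parent_idx v. W t (v[i := v ! i - 1]) e + (if e = (v, i) then 1 else 0) = 0"
  proof
    fix i assume i: "i \<in> parent_idx v"
    have "sum_list (v[i := v ! i - 1]) < sum_list (fst e)"
      using sum_list_upd[OF i] Suc.prems by simp
    then have "W t (v[i := v ! i - 1]) e = 0" by (rule Suc.IH)
    moreover have "e \<noteq> (v, i)" using Suc.prems by auto
    ultimately show "W t (v[i := v ! i - 1]) e + (if e = (v, i) then 1 else 0) = 0" by simp
  qed
  then show ?case by simp
qed simp

definition EU :: "nat \<Rightarrow> nat \<Rightarrow> (nat list \<times> nat) set" where
  "EU d t = {e \<in> cover_edges d. sum_list (fst e) \<le> t}"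

lemma finite_lists_bounded: "finite {v :: nat list. length v = n \<and> sum_list v \<le> t}"
proof -
  have "{v :: nat list. length v = n \<and> sum_list v \<le> t} \<subseteq> {v. set v \<subseteq> {..t} \<and> length v = n}"
    by (auto dest: member_le_sum_list)
  moreover have "finite {v. set v \<subseteq> {..t} \<and> length v = n}"
    by (rule finite_lists_length_eq) simp
  ultimately show ?thesis by (rule finite_subset)
qed

lemma finite_EU[simp]: "finite (EU d t)"
proof -
  have "EU d t \<subseteq> {v. length v = Suc d \<and> sum_list v \<le> t} \<times> {..<Suc d}"
    by (auto simp: EU_def cover_edges_def)
  then show ?thesis by (rule finite_subset) (intro finite_cartesian_product finite_lists_bounded finite_lessThan)
qed

lemma finite_layer[simp]: "finite (layer d t)"
  by (rule finite_subset[OF _ finite_lists_bounded[of "Suc d" t]]) (auto simp: layer_def)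

lemma EU_sub: "EU d t \<subseteq> cover_edges d" by (auto simp: EU_def)

lemma bX_rep:
  "length v = Suc d \<Longrightarrow> sum_list v = t \<Longrightarrow>
   bX G t v \<omega> = G None \<omega> + (\<Sum>e\<in>EU d t. W t v e * G (Some e) \<omega>)"
proof (induction t arbitrary: v)
  case 0
  then show ?case by simp
next
  case (Suc t)
  define P where "P = parent_idx v"
  define k where "k = real (card P)"
  have kpos: "0 < k" using card_parent_pos[of v] Suc.prems by (simp add: k_def P_def)
  have Psub: "P \<subseteq> {..<Suc d}" using parent_idx_sub[of v] Suc.prems by (simp add: P_def)
  have IH: "\<And>i. i \<in> P \<Longrightarrow> bX G t (v[i := v ! i - 1]) \<omega> =
       G None \<omega> + (\<Sum>e\<in>EU d t. W t (v[i := v ! i - 1]) e * G (Some e) \<omega>)"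
    using Suc.prems sum_list_upd by (intro Suc.IH) (auto simp: P_def)
  have ext: "\<And>i. i \<in> P \<Longrightarrow> (\<Sum>e\<in>EU d t. W t (v[i := v ! i - 1]) e * G (Some e) \<omega>)
      = (\<Sum>e\<in>EU d (Suc t). W t (v[i := v ! i - 1]) e * G (Some e) \<omega>)"
  proof -
    fix i assume i: "i \<in> P"
    show "(\<Sum>e\<in>EU d t. W t (v[i := v ! i - 1]) e * G (Some e) \<omega>)
      = (\<Sum>e\<in>EU d (Suc t). W t (v[i := v ! i - 1]) e * G (Some e) \<omega>)"
    proof (rule sum.mono_neutral_left)
      show "\<forall>e\<in>EU d (Suc t) - EU d t. W t (v[i := v ! i - 1]) e * G (Some e) \<omega> = 0"
      proof
        fix e assume e: "e \<in> EU d (Suc t) - EU d t"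
        have "sum_list (v[i := v ! i - 1]) < sum_list (fst e)"
          using e sum_list_upd[of i v] i Suc.prems by (auto simp: EU_def P_def)
        then show "W t (v[i := v ! i - 1]) e * G (Some e) \<omega> = 0" by (simp add: W_zero)
      qed
    qed (rule finite_EU, auto simp: EU_def)
  qed
  have vin: "\<And>i. i \<in> P \<Longrightarrow> (v, i) \<in> EU d (Suc t)"
    using Suc.prems by (auto simp: EU_def cover_edges_def P_def parent_idx_def)
  have ind: "\<And>i. i \<in> P \<Longrightarrow> (\<Sum>e\<in>EU d (Suc t). (if e = (v, i) then 1 else 0) * G (Some e) \<omega>) = G (Some (v, i)) \<omega>"
  proof -
    fix i assume "i \<in> P"
    then have "(v, i) \<in> EU d (Suc t)" by (rule vin)
    have "(\<Sum>e\<in>EU d (Suc t). (if e = (v, i) then 1 else 0) * G (Some e) \<omega>)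
       = (\<Sum>e\<in>EU d (Suc t). if e = (v, i) then G (Some e) \<omega> else 0)"
      by (rule sum.cong) auto
    also have "\<dots> = G (Some (v, i)) \<omega>" using \<open>(v, i) \<in> EU d (Suc t)\<close> by (simp add: sum.delta)
    finally show "(\<Sum>e\<in>EU d (Suc t). (if e = (v, i) then 1 else 0) * G (Some e) \<omega>) = G (Some (v, i)) \<omega>" .
  qed
  define E where "E = EU d (Suc t)"
  define f where "f = (\<lambda>i e. W t (v[i := v ! i - 1]) e + (if e = (v, i) then 1 else (0::real)))"
  have stepA: "bX G (Suc t) v \<omega> = (1 / k) * (\<Sum>i\<in>P. bX G t (v[i := v ! i - 1]) \<omega> + G (Some (v, i)) \<omega>)"
    by (simp add: P_def k_def)
  have stepB: "\<And>i. i \<in> P \<Longrightarrow> bX G t (v[i := v ! i - 1]) \<omega> + G (Some (v, i)) \<omega>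
      = G None \<omega> + (\<Sum>e\<in>E. f i e * G (Some e) \<omega>)"
  proof -
    fix i assume i: "i \<in> P"
    have "(\<Sum>e\<in>E. f i e * G (Some e) \<omega>) = (\<Sum>e\<in>E. W t (v[i := v ! i - 1]) e * G (Some e) \<omega>)
       + (\<Sum>e\<in>E. (if e = (v, i) then 1 else 0) * G (Some e) \<omega>)"
      unfolding f_def by (simp add: distrib_right sum.distrib)
    then show "bX G t (v[i := v ! i - 1]) \<omega> + G (Some (v, i)) \<omega>
      = G None \<omega> + (\<Sum>e\<in>E. f i e * G (Some e) \<omega>)"
      using IH[OF i] ext[OF i] ind[OF i] unfolding E_def by simp
  qed
  have stepC: "(\<Sum>i\<in>P. bX G t (v[i := v ! i - 1]) \<omega> + G (Some (v, i)) \<omega>)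
     = k * G None \<omega> + (\<Sum>i\<in>P. \<Sum>e\<in>E. f i e * G (Some e) \<omega>)"
    using stepB by (simp add: sum.distrib k_def)
  have stepD: "(\<Sum>i\<in>P. \<Sum>e\<in>E. f i e * G (Some e) \<omega>) = (\<Sum>e\<in>E. k * W (Suc t) v e * G (Some e) \<omega>)"
  proof -
    have "(\<Sum>i\<in>P. \<Sum>e\<in>E. f i e * G (Some e) \<omega>) = (\<Sum>e\<in>E. \<Sum>i\<in>P. f i e * G (Some e) \<omega>)"
      by (rule sum.swap)
    also have "\<dots> = (\<Sum>e\<in>E. (\<Sum>i\<in>P. f i e) * G (Some e) \<omega>)"
      by (simp add: sum_distrib_right)
    also have "\<dots> = (\<Sum>e\<in>E. k * W (Suc t) v e * G (Some e) \<omega>)"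
      using kpos by (intro sum.cong refl) (simp add: f_def P_def k_def)
    finally show ?thesis .
  qed
  have "bX G (Suc t) v \<omega> = (1 / k) * (k * G None \<omega> + (\<Sum>e\<in>E. k * W (Suc t) v e * G (Some e) \<omega>))"
    using stepA stepC stepD by simp
  also have "\<dots> = G None \<omega> + (\<Sum>e\<in>E. W (Suc t) v e * G (Some e) \<omega>)"
    using kpos by (simp add: sum_distrib_left field_simps)
  finally show ?case unfolding E_def .
qed



definition ax :: "nat \<Rightarrow> nat \<Rightarrow> nat \<Rightarrow> nat list" where
  "ax d j s = (replicate (Suc d) 0)[j := s]"

definition AX :: "nat \<Rightarrow> nat \<Rightarrow> (nat list \<times> nat) set" where
  "AX d L = (\<lambda>(j, s). (ax d j s, j)) ` ({..d} \<times> {1..L})"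

definition TT :: "nat \<Rightarrow> nat \<Rightarrow> nat \<Rightarrow> nat list \<Rightarrow> real" where
  "TT d L t v = (\<Sum>e\<in>AX d L. W t v e)"

lemma finite_AX[simp]: "finite (AX d L)" by (simp add: AX_def)

lemma card_AX: "card (AX d L) \<le> Suc d * L"
proof -
  have "card (AX d L) \<le> card ({..d} \<times> {1..L})" unfolding AX_def by (rule card_image_le) simp
  also have "\<dots> = Suc d * L" by (simp add: card_cartesian_product)
  finally show ?thesis .
qed

lemma ax_length[simp]: "length (ax d j s) = Suc d" by (simp add: ax_def del: replicate_Suc)
lemma ax_nth: "j \<le> d \<Longrightarrow> l \<le> d \<Longrightarrow> ax d j s ! l = (if l = j then s else 0)"
  by (simp add: ax_def nth_list_update del: replicate_Suc)
lemma ax_sum: "j \<le> d \<Longrightarrow> sum_list (ax d j s) = s"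
  by (simp add: ax_def sum_list_update del: replicate_Suc)

lemma ax_parent: "j \<le> d \<Longrightarrow> 0 < s \<Longrightarrow> parent_idx (ax d j s) = {j}"
  by (auto simp: parent_idx_def ax_nth split: if_splits)

lemma ax_upd: "j \<le> d \<Longrightarrow> (ax d j s)[j := ax d j s ! j - 1] = ax d j (s - 1)"
  by (simp add: ax_def ax_nth del: replicate_Suc)

lemma ax_inj: "j \<le> d \<Longrightarrow> ax d j s = ax d j s' \<Longrightarrow> s = s'"
  by (metis ax_nth order_refl)

lemma ax_upd': "j \<le> d \<Longrightarrow> (ax d j (Suc s))[j := ax d j (Suc s) ! j - Suc 0] = ax d j s"
  using ax_upd[of j d "Suc s"] by simp

lemma AX_mem: "(w, j) \<in> AX d L \<longleftrightarrow> j \<le> d \<and> (\<exists>s. 1 \<le> s \<and> s \<le> L \<and> w = ax d j s)"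
  unfolding AX_def by auto

lemma AX_level: "(w, j) \<in> AX d L \<Longrightarrow> sum_list w \<le> L"
  by (auto simp: AX_mem ax_sum)

lemma AX_sub_EU: "L \<le> t \<Longrightarrow> AX d L \<subseteq> EU d t"
  by (auto simp: AX_mem EU_def cover_edges_def ax_sum ax_nth)

lemma TT_nonneg: "0 \<le> TT d L t v"
  by (simp add: TT_def sum_nonneg W_nonneg)

lemma TT_Suc: "TT d L (Suc t) v = (1 / real (card (parent_idx v))) *
   (\<Sum>i\<in>parent_idx v. TT d L t (v[i := v ! i - 1]) + (if (v, i) \<in> AX d L then 1 else 0))"
proof -
  have "TT d L (Suc t) v = (1 / real (card (parent_idx v))) *
     (\<Sum>e\<in>AX d L. \<Sum>i\<in>parent_idx v. W t (v[i := v ! i - 1]) e + (if e = (v, i) then 1 else 0))"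
    by (simp add: TT_def sum_distrib_left)
  also have "(\<Sum>e\<in>AX d L. \<Sum>i\<in>parent_idx v. W t (v[i := v ! i - 1]) e + (if e = (v, i) then 1 else 0))
     = (\<Sum>i\<in>parent_idx v. \<Sum>e\<in>AX d L. W t (v[i := v ! i - 1]) e + (if e = (v, i) then 1 else 0))"
    by (rule sum.swap)
  also have "\<dots> = (\<Sum>i\<in>parent_idx v. TT d L t (v[i := v ! i - 1]) + (if (v, i) \<in> AX d L then 1 else 0))"
    by (simp add: sum.distrib TT_def)
  finally show ?thesis .
qed

lemma TT_axis: "j \<le> d \<Longrightarrow> TT d L s (ax d j s) = real (min s L)"
proof (induction s)
  case 0
  then show ?case by (simp add: TT_def)
next
  case (Suc s)
  have mem: "((ax d j (Suc s)), j) \<in> AX d L \<longleftrightarrow> Suc s \<le> L"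
    using Suc.prems ax_inj[OF Suc.prems] by (auto simp: AX_mem)
  have "TT d L (Suc s) (ax d j (Suc s)) = TT d L s (ax d j s) + (if Suc s \<le> L then 1 else 0)"
    by (simp add: TT_Suc ax_parent[OF Suc.prems] ax_upd'[OF Suc.prems] mem)
  then show ?case using Suc.IH[OF Suc.prems] by simp
qed

lemma TT_harm:
  assumes "L \<le> t" "sum_list v = Suc t"
  shows "TT d L (Suc t) v = (1 / real (card (parent_idx v))) *
   (\<Sum>i\<in>parent_idx v. TT d L t (v[i := v ! i - 1]))"
proof -
  have "\<And>i. (v, i) \<notin> AX d L" using AX_level assms by fastforce
  then show ?thesis by (simp add: TT_Suc)
qed



definition gI :: "nat \<Rightarrow> nat \<Rightarrow> real \<Rightarrow> real" where
  "gI L x \<theta> = (if x < L then 0 else PS (Suc (x - L)) \<theta>)"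
definition gO :: "nat \<Rightarrow> real \<Rightarrow> real" where
  "gO x \<theta> = 1 - PS x \<theta>"
definition gg :: "nat \<Rightarrow> nat \<Rightarrow> nat \<Rightarrow> nat \<Rightarrow> real \<Rightarrow> real" where
  "gg i L j x \<theta> = (if j = i then gI L x \<theta> else gO x \<theta>)"
definition FF :: "nat \<Rightarrow> nat \<Rightarrow> nat \<Rightarrow> nat list \<Rightarrow> real \<Rightarrow> real" where
  "FF d i L v \<theta> = (\<Prod>j<Suc d. gg i L j (v ! j) \<theta>)"

lemma PS_Suc_Suc: "PS (Suc (Suc m)) \<theta> = PS (Suc m) \<theta> + pp (Suc m) \<theta>"
  by (simp add: PS_def)

lemma gI_deriv:
  assumes "1 \<le> L"
  shows "((\<lambda>\<theta>. gI L x \<theta>) has_real_derivative (if x = 0 then 0 else gI L (x - 1) \<theta> - gI L x \<theta>)) (at \<theta>)"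
proof (cases "x < L")
  case True
  have e: "(\<lambda>\<theta>. gI L x \<theta>) = (\<lambda>_. 0)" using True by (simp add: gI_def fun_eq_iff)
  have "(if x = 0 then 0 else gI L (x - 1) \<theta> - gI L x \<theta>) = 0" using True by (simp add: gI_def)
  then show ?thesis unfolding e by simp
next
  case False
  then have x0: "x \<noteq> 0" using assms by auto
  have d: "((\<lambda>\<theta>. gI L x \<theta>) has_real_derivative - pp (x - L) \<theta>) (at \<theta>)"
    using False PS_Suc_deriv[of "x - L" \<theta>] by (simp add: gI_def)
  have "gI L (x - 1) \<theta> - gI L x \<theta> = - pp (x - L) \<theta>"
  proof (cases "x = L")
    case True then show ?thesis using assms by (simp add: gI_def PS_def)
  next
    case False
    then have "x - 1 - L = x - L - 1" "x - L = Suc (x - L - 1)" using \<open>\<not> x < L\<close> by auto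
    then show ?thesis using False \<open>\<not> x < L\<close>
      by (simp add: gI_def PS_Suc_Suc del: PS_def)
  qed
  then show ?thesis using d x0 by simp
qed

lemma gO_deriv:
  "((\<lambda>\<theta>. gO x \<theta>) has_real_derivative (if x = 0 then 0 else gO (x - 1) \<theta> - gO x \<theta>)) (at \<theta>)"
proof (cases x)
  case 0
  then show ?thesis by (simp add: gO_def PS_def)
next
  case (Suc m)
  have "((\<lambda>\<theta>. 1 - PS x \<theta>) has_real_derivative 0 - (- pp m \<theta>)) (at \<theta>)"
    using Suc PS_Suc_deriv[of m \<theta>] by (auto intro!: derivative_eq_intros)
  moreover have "gO (x - 1) \<theta> - gO x \<theta> = pp m \<theta>" using Suc by (simp add: gO_def PS_def)
  ultimately show ?thesis using Suc by (simp add: gO_def)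
qed

lemma gg_deriv:
  assumes "1 \<le> L"
  shows "((\<lambda>\<theta>. gg i L j x \<theta>) has_real_derivative (if x = 0 then 0 else gg i L j (x - 1) \<theta> - gg i L j x \<theta>)) (at \<theta>)"
proof (cases "j = i")
  case True
  have e: "(\<lambda>\<theta>. gg i L j x \<theta>) = (\<lambda>\<theta>. gI L x \<theta>)" "\<And>y. gg i L j y \<theta> = gI L y \<theta>"
    using True by (simp_all add: gg_def fun_eq_iff)
  show ?thesis unfolding e by (rule gI_deriv[OF assms])
next
  case False
  have e: "(\<lambda>\<theta>. gg i L j x \<theta>) = (\<lambda>\<theta>. gO x \<theta>)" "\<And>y. gg i L j y \<theta> = gO y \<theta>"
    using False by (simp_all add: gg_def fun_eq_iff)
  show ?thesis unfolding e by (rule gO_deriv)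
qed

lemma gg_bounds:
  assumes "0 \<le> \<theta>" shows "0 \<le> gg i L j x \<theta>" "gg i L j x \<theta> \<le> 1"
  using PS_nonneg[OF assms] PS_le1[OF assms] by (auto simp: gg_def gI_def gO_def)

lemma FF_bounds:
  assumes "0 \<le> \<theta>" shows "0 \<le> FF d i L v \<theta>" "FF d i L v \<theta> \<le> 1"
  unfolding FF_def using gg_bounds[OF assms]
  by (auto intro!: prod_nonneg prod_le_1 simp del: prod.lessThan_Suc)

lemma FF_deriv:
  assumes "1 \<le> L" "length v = Suc d"
  shows "((\<lambda>\<theta>. FF d i L v \<theta>) has_real_derivative
     (\<Sum>j\<in>parent_idx v. FF d i L (v[j := v ! j - 1]) \<theta> - FF d i L v \<theta>)) (at \<theta>)"
proof -
  define A where "A = {..<Suc d}"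
  have finA: "finite A" by (simp add: A_def)
  define f' where "f' = (\<lambda>j. if v ! j = 0 then 0 else gg i L j (v ! j - 1) \<theta> - gg i L j (v ! j) \<theta>)"
  have D: "((\<lambda>\<theta>. \<Prod>j\<in>A. gg i L j (v ! j) \<theta>) has_real_derivative
      (\<Sum>j\<in>A. f' j * (\<Prod>y\<in>A-{j}. gg i L y (v ! y) \<theta>))) (at \<theta>)"
    unfolding f'_def by (rule has_field_derivative_prod) (rule gg_deriv[OF assms(1)])
  have P: "parent_idx v \<subseteq> A" using parent_idx_sub[of v] assms by (simp add: A_def)
  have "(\<Sum>j\<in>A. f' j * (\<Prod>y\<in>A-{j}. gg i L y (v ! y) \<theta>))
      = (\<Sum>j\<in>parent_idx v. f' j * (\<Prod>y\<in>A-{j}. gg i L y (v ! y) \<theta>))"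
    using P by (intro sum.mono_neutral_right) (auto simp: A_def f'_def parent_idx_def assms)
  also have "\<dots> = (\<Sum>j\<in>parent_idx v. FF d i L (v[j := v ! j - 1]) \<theta> - FF d i L v \<theta>)"
  proof (rule sum.cong[OF refl])
    fix j assume j: "j \<in> parent_idx v"
    then have jA: "j \<in> A" and jl: "j < length v" and vj: "v ! j \<noteq> 0"
      using P by (auto simp: parent_idx_def)
    have e1: "FF d i L v \<theta> = gg i L j (v ! j) \<theta> * (\<Prod>y\<in>A-{j}. gg i L y (v ! y) \<theta>)"
      unfolding FF_def A_def[symmetric] using jA finA by (simp add: prod.remove)
    have "FF d i L (v[j := v ! j - 1]) \<theta> = gg i L j (v ! j - 1) \<theta> *
        (\<Prod>y\<in>A-{j}. gg i L y (v[j := v ! j - 1] ! y) \<theta>)"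
      unfolding FF_def A_def[symmetric] using jA jl finA by (simp add: prod.remove)
    also have "(\<Prod>y\<in>A-{j}. gg i L y (v[j := v ! j - 1] ! y) \<theta>) = (\<Prod>y\<in>A-{j}. gg i L y (v ! y) \<theta>)"
      by (rule prod.cong) auto
    finally have e2: "FF d i L (v[j := v ! j - 1]) \<theta> = gg i L j (v ! j - 1) \<theta> *
        (\<Prod>y\<in>A-{j}. gg i L y (v ! y) \<theta>)" .
    show "f' j * (\<Prod>y\<in>A-{j}. gg i L y (v ! y) \<theta>) = FF d i L (v[j := v ! j - 1]) \<theta> - FF d i L v \<theta>"
      using e1 e2 vj by (simp add: f'_def algebra_simps)
  qed
  finally show ?thesis using D by (simp add: FF_def A_def)
qed

lemma sum_others_zero:
  assumes "length v = Suc d" "i \<le> d" "sum_list v \<le> v ! i"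
  shows "v = ax d i (sum_list v)"
proof (rule nth_equalityI)
  show "length v = length (ax d i (sum_list v))" using assms by simp
next
  fix l assume l: "l < length v"
  have s: "sum_list v = (\<Sum>m<Suc d. v ! m)" using assms(1) by (simp add: sum_list_sum_nth atLeast0LessThan)
  show "v ! l = ax d i (sum_list v) ! l"
  proof (cases "l = i")
    case True
    have "v ! i \<le> sum_list v" using assms by (simp add: elem_le_sum_list)
    then show ?thesis using True assms l by (simp add: ax_nth)
  next
    case False
    have "v ! i + v ! l = (\<Sum>m\<in>{i, l}. v ! m)" using False by simp
    also have "\<dots> \<le> (\<Sum>m<Suc d. v ! m)" using l assms by (intro sum_mono2) auto
    finally have "v ! l = 0" using s assms by simp
    then show ?thesis using False l assms by (simp add: ax_nth)
  qed
qed

lemma FF_zero_if_small: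
  assumes "i \<le> d" "v ! i < L" shows "FF d i L v \<theta> = 0"
proof -
  have "gg i L i (v ! i) \<theta> = 0" using assms by (simp add: gg_def gI_def)
  then show ?thesis unfolding FF_def using assms by (intro prod_zero) auto
qed

lemma FF_at0:
  assumes "length v = Suc d" "i \<le> d" "FF d i L v 0 \<noteq> 0"
  shows "v = ax d i (sum_list v) \<and> L \<le> sum_list v"
proof -
  have "\<forall>j<Suc d. gg i L j (v ! j) 0 \<noteq> 0" using assms(3) by (auto simp: FF_def prod_zero_iff simp del: prod.lessThan_Suc)
  then have A: "L \<le> v ! i" and B: "\<forall>j<Suc d. j \<noteq> i \<longrightarrow> v ! j = 0"
    using assms(2) by (auto simp: gg_def gI_def gO_def PS_at0 split: if_splits)
  have "sum_list v \<le> v ! i"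
  proof -
    have "sum_list v = (\<Sum>m<Suc d. v ! m)" using assms(1) by (simp add: sum_list_sum_nth atLeast0LessThan)
    also have "\<dots> = (\<Sum>m\<in>{i}. v ! m)" using B assms(2) by (intro sum.mono_neutral_right) auto
    finally show ?thesis by simp
  qed
  moreover have "v ! i \<le> sum_list v" using assms by (simp add: elem_le_sum_list)
  ultimately show ?thesis using sum_others_zero[OF assms(1,2)] A by simp
qed



lemma FF_le_TT:
  assumes L: "1 \<le> L" and i: "i \<le> d"
  shows "length v = Suc d \<Longrightarrow> sum_list v = L + n \<Longrightarrow> 0 \<le> \<theta> \<Longrightarrow>
         real L * FF d i L v \<theta> \<le> TT d L (L + n) v"
proof (induction n arbitrary: v \<theta>)
  case 0
  show ?case
  proof (cases "v ! i < L")
    case True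
    then show ?thesis using FF_zero_if_small[OF i True] TT_nonneg by simp
  next
    case False
    then have "v = ax d i (sum_list v)" using 0 i by (intro sum_others_zero) auto
    then have "TT d L (L + 0) v = real L" using TT_axis[OF i, of L L] 0 by simp
    then show ?thesis using FF_bounds[OF 0(3), of d i L v] by (simp add: mult_left_le)
  qed
next
  case (Suc n)
  define s where "s = L + n"
  have ss: "L + Suc n = Suc s" by (simp add: s_def)
  define P where "P = parent_idx v"
  define k where "k = real (card P)"
  define Tv where "Tv = TT d L (Suc s) v"
  have kpos: "0 < k" using card_parent_pos[of v] Suc.prems by (simp add: k_def P_def)
  have harm: "Tv = (1 / k) * (\<Sum>j\<in>P. TT d L s (v[j := v ! j - 1]))"
    unfolding Tv_def k_def P_def by (rule TT_harm) (use Suc.prems in \<open>auto simp: s_def\<close>)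
  have IH: "\<And>j x. j \<in> P \<Longrightarrow> 0 \<le> x \<Longrightarrow> real L * FF d i L (v[j := v ! j - 1]) x \<le> TT d L s (v[j := v ! j - 1])"
    unfolding s_def using Suc.prems sum_list_upd[of _ v] by (intro Suc.IH) (auto simp: P_def)
  define \<phi> where "\<phi> = (\<lambda>x. real L * FF d i L v x - Tv)"
  define \<psi> where "\<psi> = (\<lambda>x. exp (k * x) * \<phi> x)"
  have D: "\<And>x. (\<psi> has_real_derivative
      exp (k * x) * (real L * (\<Sum>j\<in>P. FF d i L (v[j := v ! j - 1]) x - FF d i L v x)) + exp (k * x) * k * \<phi> x) (at x)"
  proof -
    fix x
    have d1: "(\<phi> has_real_derivative real L * (\<Sum>j\<in>P. FF d i L (v[j := v ! j - 1]) x - FF d i L v x)) (at x)"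
      unfolding \<phi>_def P_def using FF_deriv[OF L Suc.prems(1), of i x]
      by (auto intro!: derivative_eq_intros)
    have d2: "((\<lambda>x. exp (k * x)) has_real_derivative exp (k * x) * k) (at x)"
      by (auto intro!: derivative_eq_intros)
    show "(\<psi> has_real_derivative
      exp (k * x) * (real L * (\<Sum>j\<in>P. FF d i L (v[j := v ! j - 1]) x - FF d i L v x)) + exp (k * x) * k * \<phi> x) (at x)"
      unfolding \<psi>_def by (rule DERIV_mult'[OF d2 d1])
  qed
  have Dneg: "\<And>x. 0 \<le> x \<Longrightarrow> exp (k * x) * (real L * (\<Sum>j\<in>P. FF d i L (v[j := v ! j - 1]) x - FF d i L v x)) + exp (k * x) * k * \<phi> x \<le> 0"
  proof -
    fix x :: real assume x: "0 \<le> x"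
    have "real L * (\<Sum>j\<in>P. FF d i L (v[j := v ! j - 1]) x) \<le> (\<Sum>j\<in>P. TT d L s (v[j := v ! j - 1]))"
      unfolding sum_distrib_left by (intro sum_mono IH x)
    also have "\<dots> = k * Tv" using harm kpos by simp
    finally have a: "real L * (\<Sum>j\<in>P. FF d i L (v[j := v ! j - 1]) x) \<le> k * Tv" .
    have "k * \<phi> x + real L * (\<Sum>j\<in>P. FF d i L (v[j := v ! j - 1]) x - FF d i L v x)
        = real L * (\<Sum>j\<in>P. FF d i L (v[j := v ! j - 1]) x) - k * Tv"
      by (simp add: \<phi>_def sum_subtractf k_def algebra_simps)
    also have "\<dots> \<le> 0" using a by simp
    finally have "k * \<phi> x + real L * (\<Sum>j\<in>P. FF d i L (v[j := v ! j - 1]) x - FF d i L v x) \<le> 0" .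
    then have "exp (k * x) * (k * \<phi> x + real L * (\<Sum>j\<in>P. FF d i L (v[j := v ! j - 1]) x - FF d i L v x)) \<le> 0"
      by (simp add: mult_nonneg_nonpos)
    then show "exp (k * x) * (real L * (\<Sum>j\<in>P. FF d i L (v[j := v ! j - 1]) x - FF d i L v x)) + exp (k * x) * k * \<phi> x \<le> 0"
      by (simp add: algebra_simps)
  qed
  have "\<psi> \<theta> \<le> \<psi> 0"
    using Suc.prems(3) by (rule DERIV_nonpos_imp_nonincreasing) (use D Dneg in blast)
  moreover have "\<phi> 0 \<le> 0"
  proof (cases "FF d i L v 0 = 0")
    case True then show ?thesis using TT_nonneg by (simp add: \<phi>_def Tv_def)
  next
    case False
    then have "v = ax d i (sum_list v)" "L \<le> sum_list v" using FF_at0[OF Suc.prems(1) i] by auto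
    then have "Tv = real L" unfolding Tv_def using TT_axis[OF i, where s="Suc s" and L=L] Suc.prems(2) ss by (simp add: s_def)
    then show ?thesis using FF_bounds[of 0 d i L v] by (simp add: \<phi>_def mult_left_le)
  qed
  ultimately have "exp (k * \<theta>) * \<phi> \<theta> \<le> 0" by (simp add: \<psi>_def)
  then have "\<phi> \<theta> \<le> 0" by (simp add: mult_le_0_iff)
  then show ?case by (simp add: \<phi>_def Tv_def ss s_def)
qed



lemma TT_lower:
  assumes len: "length u = Suc d" and su: "sum_list u = t" and L1: "1 \<le> L"
    and i: "i \<le> d" and imax: "\<forall>j\<le>d. u ! j \<le> u ! i" and Li: "L \<le> u ! i"
    and cond: "36 * L ^ 2 \<le> Suc (u ! i - L)"
  shows "real L / 4 ^ Suc d \<le> TT d L t u"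
proof -
  define n where "n = u ! i - L"
  have nL: "n + L = u ! i" using Li by (simp add: n_def)
  have sq: "6 * real L \<le> sqrt (real (Suc n))"
  proof -
    have c': "real (36 * L^2) \<le> real (Suc n)" unfolding n_def using cond by (simp only: of_nat_le_iff)
    have "(6 * real L)^2 = real (36 * L^2)" by (simp add: power_mult_distrib)
    then have "(6 * real L)^2 \<le> real (Suc n)" using c' by simp
    then show ?thesis by (simp add: real_le_rsqrt)
  qed
  have mid: "\<And>x. 0 \<le> x \<Longrightarrow> PS (n + L) x - PS (Suc n) x \<le> 1/2"
  proof -
    fix x :: real assume x: "0 \<le> x"
    have "PS (n + L) x - PS (Suc n) x \<le> (real L - 1) * (exp 1 / sqrt (real (Suc n)))"
      by (rule mid_le[OF x L1])
    also have "\<dots> \<le> 1/2"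
    proof -
      have pos: "0 < sqrt (real (Suc n))" by simp
      have "exp 1 \<le> (3::real)" using exp_le by simp
      then have "(real L - 1) * exp 1 \<le> (real L) * 3" using L1
        by (intro mult_mono) auto
      also have "\<dots> \<le> sqrt (real (Suc n)) / 2" using sq by simp
      finally have "(real L - 1) * exp 1 \<le> sqrt (real (Suc n)) / 2" .
      then show ?thesis using pos by (simp add: field_simps)
    qed
    finally show "PS (n + L) x - PS (Suc n) x \<le> 1/2" .
  qed
  obtain x where x: "0 \<le> x" "1/4 \<le> PS (Suc n) x" "1/4 \<le> 1 - PS (n + L) x"
    using theta_exists[OF L1 mid] by blast
  have fac: "\<And>j. j \<in> {..<Suc d} \<Longrightarrow> 1/4 \<le> gg i L j (u ! j) x"
  proof -
    fix j assume j: "j \<in> {..<Suc d}"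
    show "1/4 \<le> gg i L j (u ! j) x"
    proof (cases "j = i")
      case True then show ?thesis using x Li by (simp add: gg_def gI_def n_def)
    next
      case False
      have "PS (u ! j) x \<le> PS (n + L) x" using imax j nL x by (intro PS_mono) auto
      then show ?thesis using False x by (simp add: gg_def gO_def)
    qed
  qed
  have "(\<Prod>j<Suc d. (1/4::real)) \<le> FF d i L u x"
    unfolding FF_def by (rule prod_mono) (use fac in auto)
  then have F: "(1/4) ^ Suc d \<le> FF d i L u x" by simp
  have tL: "L + (t - L) = t" using su nL elem_le_sum_list[of i u] len i by simp
  have "real L * FF d i L u x \<le> TT d L (L + (t - L)) u"
    using su tL by (intro FF_le_TT[OF L1 i len _ x(1)]) simp
  then have "real L * FF d i L u x \<le> TT d L t u" by (simp only: tL)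
  moreover have "real L / 4 ^ Suc d \<le> real L * FF d i L u x"
  proof -
    have "real L * (1/4) ^ Suc d \<le> real L * FF d i L u x" using F by (intro mult_left_mono) auto
    moreover have "real L * (1/4) ^ Suc d = real L / 4 ^ Suc d" by (simp add: power_one_over)
    ultimately show ?thesis by simp
  qed
  ultimately show ?thesis by simp
qed



lemma exists_max_idx:
  fixes u :: "nat list"
  obtains i where "i \<le> d" "\<forall>j\<le>d. u ! j \<le> u ! i"
proof -
  define m where "m = Max ((\<lambda>j. u ! j) ` {..d})"
  have "m \<in> (\<lambda>j. u ! j) ` {..d}" unfolding m_def by (intro Max_in) auto
  then obtain i where i: "i \<le> d" "u ! i = m" by auto
  have "\<forall>j\<le>d. u ! j \<le> m" unfolding m_def by (auto intro: Max_ge)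
  then show ?thesis using i that by auto
qed

lemma alg_eq:
  fixes S L n q :: real
  assumes "0 < L" "0 < n" "0 < q"
  shows "(S * L / q)^2 = (S^2 * L / (q^2 * n)) * (n * L)"
  using assms by (simp add: power2_eq_square field_simps)

lemma N_bound:
  fixes d t :: nat and c :: "nat list \<Rightarrow> real"
  assumes t: "72 * Suc d \<le> t" and cnn: "\<forall>u\<in>layer d t. 0 \<le> c u"
  defines "S \<equiv> (\<Sum>u\<in>layer d t. c u)"
  defines "L \<equiv> nat \<lfloor>sqrt (real t / (72 * Suc d))\<rfloor>"
  shows "1 \<le> L" "sqrt (real t / (72 * Suc d)) \<le> 2 * real L"
    "S^2 * real L / (((4::real) ^ Suc d)^2 * real (Suc d)) \<le> (\<Sum>e\<in>EU d t. (\<Sum>u\<in>layer d t. c u * W t u e)^2)"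
proof -
  define x where "x = sqrt (real t / (72 * Suc d))"
  have x1: "1 \<le> x" unfolding x_def using t by (simp add: real_le_rsqrt field_simps)
  have Lx: "real L \<le> x" "x < real L + 1" unfolding L_def x_def[symmetric] using x1 by linarith+
  show L1: "1 \<le> L" unfolding L_def x_def[symmetric] using x1 by linarith
  show "sqrt (real t / (72 * Suc d)) \<le> 2 * real L" using Lx L1 unfolding x_def by linarith
  have L2: "72 * Suc d * L^2 \<le> t"
  proof -
    have "real L ^ 2 \<le> x ^ 2" using Lx by (intro power_mono) auto
    also have "\<dots> = real t / (72 * Suc d)" unfolding x_def by simp
    finally have "real (72 * Suc d * L^2) \<le> real t" by (simp add: field_simps)
    then show ?thesis by (simp only: of_nat_le_iff)
  qed
  have Lt: "L \<le> t"
  proof -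
    have "L \<le> L^2" using L1 by (simp add: power2_eq_square)
    moreover have "L^2 \<le> 72 * Suc d * L^2" by simp
    ultimately show ?thesis using L2 by linarith
  qed
  have TTl: "\<And>u. u \<in> layer d t \<Longrightarrow> real L / 4 ^ Suc d \<le> TT d L t u"
  proof -
    fix u assume u: "u \<in> layer d t"
    then have len: "length u = Suc d" and su: "sum_list u = t" by (auto simp: layer_def)
    obtain i where i: "i \<le> d" "\<forall>j\<le>d. u ! j \<le> u ! i" using exists_max_idx by blast
    have "t = (\<Sum>j<Suc d. u ! j)" using su len by (simp add: sum_list_sum_nth atLeast0LessThan)
    also have "\<dots> \<le> (\<Sum>j<Suc d. u ! i)" using i by (intro sum_mono) auto
    finally have "t \<le> Suc d * u ! i" by simp
    then have "Suc d * (72 * L^2) \<le> Suc d * u ! i" using L2 by (simp add: algebra_simps)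
    then have ui: "72 * L^2 \<le> u ! i" by (simp only: mult_le_cancel1)
    have LL: "L \<le> L^2" using L1 by (simp add: power2_eq_square)
    show "real L / 4 ^ Suc d \<le> TT d L t u"
      by (rule TT_lower[OF len su L1 i]) (use ui LL in linarith)+
  qed
  define a where "a = (\<lambda>e. \<Sum>u\<in>layer d t. c u * W t u e)"
  have sumAX: "S * real L / 4 ^ Suc d \<le> (\<Sum>e\<in>AX d L. a e)"
  proof -
    have "(\<Sum>e\<in>AX d L. a e) = (\<Sum>u\<in>layer d t. c u * TT d L t u)"
      unfolding a_def TT_def by (simp add: sum.swap[of _ "AX d L"] sum_distrib_left)
    also have "\<dots> \<ge> (\<Sum>u\<in>layer d t. c u * (real L / 4 ^ Suc d))"
      using cnn TTl by (intro sum_mono mult_left_mono) auto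
    finally show ?thesis by (simp add: S_def sum_distrib_right sum_divide_distrib)
  qed
  have Spos: "0 \<le> S" unfolding S_def using cnn by (simp add: sum_nonneg)
  have "(S * real L / 4 ^ Suc d)^2 \<le> (\<Sum>e\<in>AX d L. a e)^2"
    using sumAX Spos by (intro power_mono) auto
  also have "\<dots> \<le> (\<Sum>e\<in>AX d L. (a e)^2) * card (AX d L)" by (rule sum_squared_le_sum_of_squares)
  also have "\<dots> \<le> (\<Sum>e\<in>EU d t. (a e)^2) * (real (Suc d) * real L)"
  proof (intro mult_mono)
    show "(\<Sum>e\<in>AX d L. (a e)^2) \<le> (\<Sum>e\<in>EU d t. (a e)^2)"
      using AX_sub_EU[OF Lt] by (intro sum_mono2) auto
    have "real (card (AX d L)) \<le> real (Suc d * L)" using card_AX by (simp only: of_nat_le_iff)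
    then show "real (card (AX d L)) \<le> real (Suc d) * real L" by (simp add: algebra_simps)
  qed (auto intro: sum_nonneg)
  finally have "(S * real L / 4 ^ Suc d)^2 \<le> (\<Sum>e\<in>EU d t. (a e)^2) * (real (Suc d) * real L)" .
  moreover have "(S * real L / 4 ^ Suc d)^2 = (S^2 * real L / (((4::real) ^ Suc d)^2 * real (Suc d))) * (real (Suc d) * real L)"
    by (rule alg_eq) (use L1 in auto)
  ultimately have "(S^2 * real L / (((4::real) ^ Suc d)^2 * real (Suc d))) * (real (Suc d) * real L) \<le> (\<Sum>e\<in>EU d t. (a e)^2) * (real (Suc d) * real L)"
    by simp
  then have "S^2 * real L / (((4::real) ^ Suc d)^2 * real (Suc d)) \<le> (\<Sum>e\<in>EU d t. (a e)^2)"
    by (rule mult_right_le_imp_le) (use L1 in simp)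
  then show "S^2 * real L / (((4::real) ^ Suc d)^2 * real (Suc d)) \<le> (\<Sum>e\<in>EU d t. (\<Sum>u\<in>layer d t. c u * W t u e)^2)"
    by (simp add: a_def)
qed



lemma gauss_lin:
  fixes G :: "'i \<Rightarrow> 'a \<Rightarrow> real" and b :: "'i \<Rightarrow> real"
  assumes M: "prob_space M" and ind: "prob_space.indep_vars M (\<lambda>_. borel) G I"
   and nd: "\<forall>j\<in>I. distributed M lborel (G j) std_normal_density"
   and J: "finite J" "J \<subseteq> I" "j0 \<in> J"
  shows "covariance M (\<lambda>\<omega>. \<Sum>j\<in>J. b j * G j \<omega>) (G j0) = b j0"
    and "var M (\<lambda>\<omega>. \<Sum>j\<in>J. b j * G j \<omega>) = (\<Sum>j\<in>J. (b j)^2)"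
proof -
  interpret prob_space M by (rule M)
  have nn: "\<And>x. 0 \<le> std_normal_density x" by simp
  have intG: "\<And>j. j \<in> I \<Longrightarrow> integrable M (G j)"
  proof -
    fix j assume j: "j \<in> I"
    have "integrable lborel (\<lambda>x. std_normal_density x * x)"
      using integrable_std_normal_moment[of 1] by simp
    then have "integrable M (\<lambda>x. G j x)"
      using distributed_integrable[OF nd[rule_format, OF j], of "\<lambda>x. x"] by simp
    then show "integrable M (G j)" by simp
  qed
  have EG: "\<And>j. j \<in> I \<Longrightarrow> (\<integral>\<omega>. G j \<omega> \<partial>M) = 0"
    using nd standard_normal_distributed_expectation by auto
  have intG2: "\<And>j. j \<in> I \<Longrightarrow> integrable M (\<lambda>\<omega>. G j \<omega> * G j \<omega>)"
  proof -
    fix j assume j: "j \<in> I"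
    have "integrable lborel (\<lambda>x. std_normal_density x * x^2)"
      using integrable_std_normal_moment[of 2] by simp
    then have "integrable M (\<lambda>x. (G j x)^2)"
      using distributed_integrable[OF nd[rule_format, OF j], of "\<lambda>x. x^2"] by simp
    then show "integrable M (\<lambda>\<omega>. G j \<omega> * G j \<omega>)" by (simp add: power2_eq_square)
  qed
  have EG2: "\<And>j. j \<in> I \<Longrightarrow> (\<integral>\<omega>. G j \<omega> * G j \<omega> \<partial>M) = 1"
  proof -
    fix j assume j: "j \<in> I"
    have "(\<integral>x. std_normal_density x * x^2 \<partial>lborel) = (\<integral>x. (G j x)^2 \<partial>M)"
      by (rule distributed_integral[OF nd[rule_format, OF j]]) auto
    moreover have "(\<integral>x. std_normal_density x * x^2 \<partial>lborel) = 1"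
      using integral_std_normal_moment_even[of 1] by (simp add: numeral_eq_Suc)
    ultimately show "(\<integral>\<omega>. G j \<omega> * G j \<omega> \<partial>M) = 1" by (simp add: power2_eq_square)
  qed
  have pair: "\<And>j k. j \<in> I \<Longrightarrow> k \<in> I \<Longrightarrow> j \<noteq> k \<Longrightarrow>
      integrable M (\<lambda>\<omega>. G j \<omega> * G k \<omega>) \<and> (\<integral>\<omega>. G j \<omega> * G k \<omega> \<partial>M) = 0"
  proof -
    fix j k assume jk: "j \<in> I" "k \<in> I" "j \<noteq> k"
    have s1: "indep_vars (\<lambda>_. borel) G (insert j {k})"
      by (rule indep_vars_subset[OF ind]) (use jk in auto)
    have "indep_var borel (G j) borel (\<lambda>\<omega>. \<Sum>i\<in>{k}. G i \<omega>)"
      by (rule indep_vars_sum[OF _ _ s1]) (use jk in auto)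
    then have iv: "indep_var borel (G j) borel (G k)" by simp
    have i1: "integrable M (\<lambda>\<omega>. G j \<omega> * G k \<omega>)"
      by (rule indep_var_integrable[OF iv intG[OF jk(1)] intG[OF jk(2)]])
    have i2: "(\<integral>\<omega>. G j \<omega> * G k \<omega> \<partial>M) = (\<integral>\<omega>. G j \<omega> \<partial>M) * (\<integral>\<omega>. G k \<omega> \<partial>M)"
      by (rule indep_var_lebesgue_integral[OF iv intG[OF jk(1)] intG[OF jk(2)]])
    show "integrable M (\<lambda>\<omega>. G j \<omega> * G k \<omega>) \<and> (\<integral>\<omega>. G j \<omega> * G k \<omega> \<partial>M) = 0"
      using i1 i2 EG[OF jk(1)] by simp
  qed
  have intP: "\<And>j k. j \<in> I \<Longrightarrow> k \<in> I \<Longrightarrow> integrable M (\<lambda>\<omega>. G j \<omega> * G k \<omega>)"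
  proof -
    fix j k assume "j \<in> I" "k \<in> I"
    then show "integrable M (\<lambda>\<omega>. G j \<omega> * G k \<omega>)"
      using pair[of j k] intG2[of j] by (cases "j = k") auto
  qed
  have EP: "\<And>j k. j \<in> I \<Longrightarrow> k \<in> I \<Longrightarrow> (\<integral>\<omega>. G j \<omega> * G k \<omega> \<partial>M) = (if j = k then 1 else 0)"
    using pair EG2 by auto
  define Y where "Y = (\<lambda>\<omega>. \<Sum>j\<in>J. b j * G j \<omega>)"
  have JI: "\<And>j. j \<in> J \<Longrightarrow> j \<in> I" using J by auto
  have EY: "(\<integral>\<omega>. Y \<omega> \<partial>M) = 0"
  proof -
    have "(\<integral>\<omega>. Y \<omega> \<partial>M) = (\<Sum>j\<in>J. \<integral>\<omega>. b j * G j \<omega> \<partial>M)"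
      unfolding Y_def by (rule Bochner_Integration.integral_sum[where I=J and M=M and f="\<lambda>j \<omega>. b j * G j \<omega>"]) (auto intro!: integrable_mult_right intG JI)
    also have "\<dots> = 0" by (simp add: EG JI)
    finally show ?thesis .
  qed
  have EYG: "(\<integral>\<omega>. Y \<omega> * G j0 \<omega> \<partial>M) = b j0"
  proof -
    have "(\<integral>\<omega>. Y \<omega> * G j0 \<omega> \<partial>M) = (\<integral>\<omega>. (\<Sum>j\<in>J. b j * (G j \<omega> * G j0 \<omega>)) \<partial>M)"
      unfolding Y_def by (simp add: sum_distrib_right mult.assoc)
    also have "\<dots> = (\<Sum>j\<in>J. (\<integral>\<omega>. b j * (G j \<omega> * G j0 \<omega>) \<partial>M))"
      by (rule Bochner_Integration.integral_sum[where I=J and M=M and f="\<lambda>j \<omega>. b j * (G j \<omega> * G j0 \<omega>)"]) (auto intro!: integrable_mult_right intP JI J(3))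
    also have "\<dots> = (\<Sum>j\<in>J. b j * (if j = j0 then 1 else 0))"
      using J by (intro sum.cong refl) (simp add: EP JI J(3))
    also have "\<dots> = b j0" using J by (simp add: if_distrib sum.delta cong: if_cong)
    finally show ?thesis .
  qed
  have EYY: "(\<integral>\<omega>. Y \<omega> * Y \<omega> \<partial>M) = (\<Sum>j\<in>J. (b j)^2)"
  proof -
    have "(\<integral>\<omega>. Y \<omega> * Y \<omega> \<partial>M) = (\<integral>\<omega>. (\<Sum>j\<in>J. \<Sum>k\<in>J. b j * b k * (G j \<omega> * G k \<omega>)) \<partial>M)"
      unfolding Y_def by (simp add: sum_product algebra_simps)
    also have "\<dots> = (\<Sum>j\<in>J. \<Sum>k\<in>J. b j * b k * (\<integral>\<omega>. G j \<omega> * G k \<omega> \<partial>M))"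
    proof -
      have "(\<integral>\<omega>. (\<Sum>j\<in>J. \<Sum>k\<in>J. b j * b k * (G j \<omega> * G k \<omega>)) \<partial>M)
          = (\<Sum>j\<in>J. \<integral>\<omega>. (\<Sum>k\<in>J. b j * b k * (G j \<omega> * G k \<omega>)) \<partial>M)"
        by (rule Bochner_Integration.integral_sum[where I=J and M=M and f="\<lambda>j \<omega>. \<Sum>k\<in>J. b j * b k * (G j \<omega> * G k \<omega>)"]) (auto intro!: integrable_sum integrable_mult_right intP JI)
      also have "\<dots> = (\<Sum>j\<in>J. \<Sum>k\<in>J. \<integral>\<omega>. b j * b k * (G j \<omega> * G k \<omega>) \<partial>M)"
        by (intro sum.cong refl Bochner_Integration.integral_sum[where I=J and M=M]) (auto intro!: integrable_mult_right intP JI)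
      also have "\<dots> = (\<Sum>j\<in>J. \<Sum>k\<in>J. b j * b k * (\<integral>\<omega>. G j \<omega> * G k \<omega> \<partial>M))"
        by simp
      finally show ?thesis .
    qed
    also have "\<dots> = (\<Sum>j\<in>J. \<Sum>k\<in>J. b j * b k * (if j = k then 1 else 0))"
      by (intro sum.cong refl) (simp add: EP JI)
    also have "\<dots> = (\<Sum>j\<in>J. (b j)^2)"
      using J by (simp add: if_distrib sum.delta power2_eq_square cong: if_cong)
    finally show ?thesis .
  qed
  show "covariance M (\<lambda>\<omega>. \<Sum>j\<in>J. b j * G j \<omega>) (G j0) = b j0"
    unfolding covariance_def Y_def[symmetric] using EY EYG EG[OF JI[OF J(3)]] by simp
  show "var M (\<lambda>\<omega>. \<Sum>j\<in>J. b j * G j \<omega>) = (\<Sum>j\<in>J. (b j)^2)"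
    unfolding var_def covariance_def Y_def[symmetric] using EY EYY by simp
qed



lemma sum_opt: "finite A \<Longrightarrow> (\<Sum>j\<in>insert None (Some ` A). f j) = f None + (\<Sum>e\<in>A. f (Some e))"
proof -
  assume A: "finite A"
  have "(\<Sum>j\<in>insert None (Some ` A). f j) = f None + (\<Sum>j\<in>Some ` A. f j)"
    using A by (intro sum.insert) auto
  also have "(\<Sum>j\<in>Some ` A. f j) = (\<Sum>e\<in>A. f (Some e))"
    by (rule sum.reindex_cong[of Some]) (auto simp: inj_on_def)
  finally show ?thesis .
qed

lemma zeta_rep:
  shows "(\<lambda>\<omega>. \<Sum>u\<in>layer d t. c u * broadcastX G u \<omega>) =
    (\<lambda>\<omega>. \<Sum>j\<in>insert None (Some ` EU d t).
       (case j of None \<Rightarrow> (\<Sum>u\<in>layer d t. c u) | Some e \<Rightarrow> (\<Sum>u\<in>layer d t. c u * W t u e)) * G j \<omega>)"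
proof
  fix \<omega>
  have "(\<Sum>u\<in>layer d t. c u * broadcastX G u \<omega>) =
     (\<Sum>u\<in>layer d t. c u * (G None \<omega> + (\<Sum>e\<in>EU d t. W t u e * G (Some e) \<omega>)))"
  proof (rule sum.cong[OF refl])
    fix u assume "u \<in> layer d t"
    then have u: "length u = Suc d" "sum_list u = t" by (auto simp: layer_def)
    have "broadcastX G u \<omega> = G None \<omega> + (\<Sum>e\<in>EU d t. W t u e * G (Some e) \<omega>)"
      unfolding broadcastX_def u(2) by (rule bX_rep[OF u])
    then show "c u * broadcastX G u \<omega> = c u * (G None \<omega> + (\<Sum>e\<in>EU d t. W t u e * G (Some e) \<omega>))"
      by simp
  qed
  also have "\<dots> = (\<Sum>u\<in>layer d t. c u) * G None \<omega> + (\<Sum>e\<in>EU d t. (\<Sum>u\<in>layer d t. c u * W t u e) * G (Some e) \<omega>)"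
  proof -
    have "(\<Sum>u\<in>layer d t. c u * (G None \<omega> + (\<Sum>e\<in>EU d t. W t u e * G (Some e) \<omega>)))
       = (\<Sum>u\<in>layer d t. c u) * G None \<omega> + (\<Sum>u\<in>layer d t. \<Sum>e\<in>EU d t. c u * W t u e * G (Some e) \<omega>)"
    proof -
      have "\<And>u. c u * (G None \<omega> + (\<Sum>e\<in>EU d t. W t u e * G (Some e) \<omega>))
          = c u * G None \<omega> + (\<Sum>e\<in>EU d t. c u * W t u e * G (Some e) \<omega>)"
        by (simp add: distrib_left sum_distrib_left mult.assoc)
      then have "(\<Sum>u\<in>layer d t. c u * (G None \<omega> + (\<Sum>e\<in>EU d t. W t u e * G (Some e) \<omega>)))
          = (\<Sum>u\<in>layer d t. c u * G None \<omega> + (\<Sum>e\<in>EU d t. c u * W t u e * G (Some e) \<omega>))"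
        by simp
      also have "\<dots> = (\<Sum>u\<in>layer d t. c u * G None \<omega>) + (\<Sum>u\<in>layer d t. \<Sum>e\<in>EU d t. c u * W t u e * G (Some e) \<omega>)"
        by (rule sum.distrib)
      also have "(\<Sum>u\<in>layer d t. c u * G None \<omega>) = (\<Sum>u\<in>layer d t. c u) * G None \<omega>"
        by (rule sum_distrib_right[symmetric])
      finally show ?thesis .
    qed
    also have "(\<Sum>u\<in>layer d t. \<Sum>e\<in>EU d t. c u * W t u e * G (Some e) \<omega>)
       = (\<Sum>e\<in>EU d t. \<Sum>u\<in>layer d t. c u * W t u e * G (Some e) \<omega>)"
      by (rule sum.swap)
    also have "\<dots> = (\<Sum>e\<in>EU d t. (\<Sum>u\<in>layer d t. c u * W t u e) * G (Some e) \<omega>)"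
      by (rule sum.cong[OF refl]) (rule sum_distrib_right[symmetric])
    finally show ?thesis .
  qed
  also have "\<dots> = (\<Sum>j\<in>insert None (Some ` EU d t).
       (case j of None \<Rightarrow> (\<Sum>u\<in>layer d t. c u) | Some e \<Rightarrow> (\<Sum>u\<in>layer d t. c u * W t u e)) * G j \<omega>)"
    by (subst sum_opt[OF finite_EU]) simp
  finally show "(\<Sum>u\<in>layer d t. c u * broadcastX G u \<omega>) = (\<Sum>j\<in>insert None (Some ` EU d t).
       (case j of None \<Rightarrow> (\<Sum>u\<in>layer d t. c u) | Some e \<Rightarrow> (\<Sum>u\<in>layer d t. c u * W t u e)) * G j \<omega>)" .
qed

lemma sq_split:
  "(\<Sum>j\<in>insert None (Some ` EU d t).
       ((case j of None \<Rightarrow> S | Some e \<Rightarrow> (a e :: real)))^2) = S^2 + (\<Sum>e\<in>EU d t. (a e)^2)"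
  by (subst sum_opt[OF finite_EU]) simp

lemma final_ineq:
  fixes S N x K1 :: real
  assumes S: "0 < S" and N: "0 \<le> N" and Nb: "S^2 * sqrt t / K1^2 \<le> S^2 + N" and K: "0 < K1" "K1 \<le> K"
    and t: "0 < t"
  shows "S / sqrt (S^2 + N) \<le> K / t powr (1/4)"
proof -
  have tq: "(t powr (1/4))^2 = sqrt t"
  proof -
    have "(t powr (1/4))^2 = t powr (1/4) * t powr (1/4)" by (simp add: power2_eq_square)
    also have "\<dots> = t powr (1/4 + 1/4)" by (simp only: powr_add)
    also have "\<dots> = t powr (1/2)" by simp
    also have "\<dots> = sqrt t" using t by (simp add: powr_half_sqrt)
    finally show ?thesis .
  qed
  have tp: "0 < t powr (1/4)" using t by simp
  have K1sq: "0 < K1^2" using K by simp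
  have "S^2 * sqrt t \<le> (S^2 + N) * K1^2" using Nb by (simp only: pos_divide_le_eq[OF K1sq])
  also have "\<dots> \<le> (S^2 + N) * K^2"
    using K N S by (intro mult_left_mono power_mono) auto
  finally have a: "S^2 * sqrt t \<le> (S^2 + N) * K^2" .
  have e1: "(S * t powr (1/4))^2 = S^2 * sqrt t" by (simp only: power_mult_distrib tq)
  have e2: "(K * sqrt (S^2 + N))^2 = (S^2 + N) * K^2"
    using N by (simp add: power_mult_distrib)
  have sq2: "(S * t powr (1/4))^2 \<le> (K * sqrt (S^2 + N))^2" unfolding e1 e2 by (rule a)
  have k0: "0 \<le> K" using K by linarith
  have s0: "0 \<le> sqrt (S^2 + N)" using N by simp
  have nn: "0 \<le> K * sqrt (S^2 + N)" by (rule mult_nonneg_nonneg[OF k0 s0])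
  have b: "S * t powr (1/4) \<le> K * sqrt (S^2 + N)" by (rule power2_le_imp_le[OF sq2 nn])
  have sp: "0 < sqrt (S^2 + N)" using S N by (simp add: add_pos_nonneg)
  have "S / sqrt (S^2 + N) = (S * t powr (1/4)) / (sqrt (S^2 + N) * t powr (1/4))" using tp by simp
  also have "\<dots> \<le> (K * sqrt (S^2 + N)) / (sqrt (S^2 + N) * t powr (1/4))"
    using sp tp by (intro divide_right_mono[OF b]) simp
  also have "\<dots> = K / t powr (1/4)" using sp by simp
  finally show ?thesis .
qed



theorem mainTheorem3:
  fixes d :: nat
  shows "\<exists>K>0. \<forall>(M :: 'a measure) G (t :: nat) (c :: nat list \<Rightarrow> real).
    prob_space M \<longrightarrow>
    prob_space.indep_vars M (\<lambda>_. borel) G (insert None (Some ` cover_edges d)) \<longrightarrow>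
    (\<forall>j\<in>insert None (Some ` cover_edges d). distributed M lborel (G j) std_normal_density) \<longrightarrow>
    1 \<le> t \<longrightarrow>
    (\<forall>u\<in>layer d t. 0 \<le> c u) \<longrightarrow>
    0 < (\<Sum>u\<in>layer d t. c u) \<longrightarrow>
    (let \<zeta> = (\<lambda>\<omega>. \<Sum>u\<in>layer d t. c u * broadcastX G u \<omega>)
     in covariance M \<zeta> (G None) / sqrt (var M \<zeta>) \<le> K / real t powr (1/4))"
proof -
  define \<kappa> where "\<kappa> = ((4::real) ^ Suc d)^2 * real (Suc d)"
  define K1 where "K1 = sqrt (2 * \<kappa> * sqrt (72 * real (Suc d)))"
  define K2 where "K2 = sqrt (sqrt (72 * real (Suc d)))"
  define K where "K = K1 + K2"
  have kp: "0 < \<kappa>" by (simp add: \<kappa>_def)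
  have K1p: "0 < K1" using kp by (simp add: K1_def)
  have K2p: "0 < K2" by (simp add: K2_def)
  have Kp: "0 < K" using K1p K2p by (simp add: K_def)
  have K1K: "K1 \<le> K" and K2K: "K2 \<le> K" using K1p K2p by (simp_all add: K_def)
  show ?thesis
  proof (intro exI[of _ K] conjI Kp allI impI)
    fix M :: "'a measure" and G t and c :: "nat list \<Rightarrow> real"
    assume M: "prob_space M"
      and ind: "prob_space.indep_vars M (\<lambda>_. borel) G (insert None (Some ` cover_edges d))"
      and nd: "\<forall>j\<in>insert None (Some ` cover_edges d). distributed M lborel (G j) std_normal_density"
      and t1: "1 \<le> t" and cnn: "\<forall>u\<in>layer d t. 0 \<le> c u" and Spos: "0 < (\<Sum>u\<in>layer d t. c u)"
    define S where "S = (\<Sum>u\<in>layer d t. c u)"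
    define a where "a = (\<lambda>e. \<Sum>u\<in>layer d t. c u * W t u e)"
    define b where "b = (\<lambda>j. case j of None \<Rightarrow> S | Some e \<Rightarrow> a e)"
    define J where "J = insert None (Some ` EU d t)"
    define N where "N = (\<Sum>e\<in>EU d t. (a e)^2)"
    have zeta: "(\<lambda>\<omega>. \<Sum>u\<in>layer d t. c u * broadcastX G u \<omega>) = (\<lambda>\<omega>. \<Sum>j\<in>J. b j * G j \<omega>)"
      unfolding J_def b_def S_def a_def by (rule zeta_rep)
    have JI: "J \<subseteq> insert None (Some ` cover_edges d)" using EU_sub by (auto simp: J_def)
    have finJ: "finite J" by (simp add: J_def)
    have NJ: "None \<in> J" by (simp add: J_def)
    have cov: "covariance M (\<lambda>\<omega>. \<Sum>j\<in>J. b j * G j \<omega>) (G None) = S"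
    proof -
      have "covariance M (\<lambda>\<omega>. \<Sum>j\<in>J. b j * G j \<omega>) (G None) = b None"
        by (rule gauss_lin(1)[OF M ind nd finJ JI NJ])
      then show ?thesis by (simp add: b_def)
    qed
    have va: "var M (\<lambda>\<omega>. \<Sum>j\<in>J. b j * G j \<omega>) = S^2 + N"
    proof -
      have "var M (\<lambda>\<omega>. \<Sum>j\<in>J. b j * G j \<omega>) = (\<Sum>j\<in>J. (b j)^2)"
        by (rule gauss_lin(2)[OF M ind nd finJ JI NJ])
      also have "\<dots> = S^2 + N" unfolding J_def b_def N_def by (rule sq_split)
      finally show ?thesis .
    qed
    have Nn: "0 \<le> N" by (simp add: N_def sum_nonneg)
    have Sp: "0 < S" using Spos by (simp add: S_def)
    have tp: "0 < real t" using t1 by simp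
    have main: "S / sqrt (S^2 + N) \<le> K / real t powr (1/4)"
    proof (cases "72 * Suc d \<le> t")
      case True
      define L where "L = nat \<lfloor>sqrt (real t / (72 * Suc d))\<rfloor>"
      have NB: "S^2 * real L / (((4::real) ^ Suc d)^2 * real (Suc d)) \<le> N"
        and L2: "sqrt (real t / (72 * Suc d)) \<le> 2 * real L"
        using N_bound[OF True cnn] by (simp_all add: L_def N_def a_def S_def)
      have "S^2 * sqrt (real t) / K1^2 \<le> N"
      proof -
        have sq: "sqrt (real t / (72 * Suc d)) = sqrt (real t) / sqrt (72 * real (Suc d))"
          by (simp add: real_sqrt_divide)
        have s72: "0 < sqrt (72 * real (Suc d))" by simp
        have "K1^2 = 2 * \<kappa> * sqrt (72 * real (Suc d))" using kp by (simp add: K1_def)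
        then have "S^2 * sqrt (real t) / K1^2 = S^2 * (sqrt (real t) / sqrt (72 * real (Suc d))) / (2 * \<kappa>)"
          using s72 kp by (simp add: field_simps)
        also have "\<dots> \<le> S^2 * (2 * real L) / (2 * \<kappa>)"
          using L2 sq kp by (intro divide_right_mono mult_left_mono) auto
        also have "\<dots> = S^2 * real L / \<kappa>" by simp
        also have "\<dots> \<le> N" using NB by (simp add: \<kappa>_def)
        finally show ?thesis .
      qed
      then have "S^2 * sqrt (real t) / K1^2 \<le> S^2 + N" by (simp add: add_increasing)
      then show ?thesis by (rule final_ineq[OF Sp Nn _ K1p K1K tp])
    next
      case False
      have "t < 72 * Suc d" using False by simp
      then have "real t < real (72 * Suc d)" by (simp only: of_nat_less_iff)
      then have "real t \<le> 72 * real (Suc d)" by simp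
      then have st: "sqrt (real t) \<le> sqrt (72 * real (Suc d))" by (rule real_sqrt_le_mono)
      have K2sq: "K2^2 = sqrt (72 * real (Suc d))" by (simp add: K2_def)
      have s72: "0 < sqrt (72 * real (Suc d))" by simp
      have "sqrt (real t) / K2^2 \<le> 1" using st s72 by (simp add: K2sq)
      then have "S^2 * (sqrt (real t) / K2^2) \<le> S^2 * 1" by (intro mult_left_mono) auto
      then have "S^2 * sqrt (real t) / K2^2 \<le> S^2 + N" using Nn by simp
      then show ?thesis by (rule final_ineq[OF Sp Nn _ K2p K2K tp])
    qed
    show "let \<zeta> = (\<lambda>\<omega>. \<Sum>u\<in>layer d t. c u * broadcastX G u \<omega>)
       in covariance M \<zeta> (G None) / sqrt (var M \<zeta>) \<le> K / real t powr (1/4)"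
      unfolding Let_def zeta cov va using main .
  qed
qed


end
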